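(* Let $n\ge1$ and $k$ be integers with $1\le k\le 32n$. For $p\in\Delta^k$, let $X_1,\dots,X_n$ be i.i.d. categorical on $[k]=\{1,\dots,k\}$ with $\Pr[X_i=j]=p_j$. Then \[ \inf_{\hat p}\sup_{p\in\Delta^k}\mathbb E\big[\|p-\hat p(X_1,\dots,X_n)\|_1\big]\ge\frac{3\log 2}{4096}\sqrt{\frac{k-1}{n}}, \] where the infimum is over all (possibly randomized) functions $\hat p:[k]^n\to\Delta^k$.
   Context: $\Delta^k:=\{p\in[0,1]^k:\sum_{j=1}^k p_j=1\}$ is the probability simplex, and $\|v\|_1=\sum_j|v_j|$. *)

theory Defs
  imports "HOL-Probability.Probability" "HOL-Library.FuncSet"
begin

definition prob_simplex :: "nat \<Rightarrow> (nat \<Rightarrow> real) set" where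
  "prob_simplex k = {p. (\<forall>j\<in>{1..k}. 0 \<le> p j \<and> p j \<le> 1) \<and> (\<Sum>j=1..k. p j) = 1
                   \<and> (\<forall>j. j \<notin> {1..k} \<longrightarrow> p j = 0)}"

definition l1dist :: "nat \<Rightarrow> (nat \<Rightarrow> real) \<Rightarrow> (nat \<Rightarrow> real) \<Rightarrow> real" where
  "l1dist k p q = (\<Sum>j=1..k. \<bar>p j - q j\<bar>)"

text \<open>Samples (X_1,...,X_n) in [k]^n, indexed by {0..<n}.\<close>
definition samples :: "nat \<Rightarrow> nat \<Rightarrow> (nat \<Rightarrow> nat) set" where
  "samples k n = ({0..<n} \<rightarrow>\<^sub>E {1..k})"

definition sample_prob :: "nat \<Rightarrow> (nat \<Rightarrow> real) \<Rightarrow> (nat \<Rightarrow> nat) \<Rightarrow> real" where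
  "sample_prob n p x = (\<Prod>i<n. p (x i))"

text \<open>Deterministic estimators correspond to Dirac measures.\<close>
definition randomized_estimator :: "nat \<Rightarrow> nat \<Rightarrow> ((nat \<Rightarrow> nat) \<Rightarrow> (nat \<Rightarrow> real) measure) \<Rightarrow> bool" where
  "randomized_estimator k n est \<longleftrightarrow>
     (\<forall>x\<in>samples k n. prob_space (est x) \<and> space (est x) \<subseteq> prob_simplex k \<and>
        (\<forall>p. (\<lambda>q. l1dist k p q) \<in> borel_measurable (est x)))"

definition risk :: "nat \<Rightarrow> nat \<Rightarrow> ((nat \<Rightarrow> nat) \<Rightarrow> (nat \<Rightarrow> real) measure) \<Rightarrow> (nat \<Rightarrow> real) \<Rightarrow> ennreal" where
  "risk k n est p = (\<Sum>x\<in>samples k n. ennreal (sample_prob n p x) *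
                        (\<integral>\<^sup>+ q. ennreal (l1dist k p q) \<partial>(est x)))"

end

theory Submission imports Defs begin

lemma sample_sum:
  fixes f :: "nat \<Rightarrow> real"
  shows "(\<Sum>x\<in>samples k n. \<Prod>i<n. f (x i)) = (\<Sum>a=1..k. f a)^n"
proof -
  have "(\<Prod>i\<in>{..<n}. \<Sum>y\<in>{1..k}. f y) = (\<Sum>g\<in>PiE {..<n} (\<lambda>_. {1..k}). \<Prod>i\<in>{..<n}. f (g i))"
    by (rule prod_sum_PiE[of "{..<n}" "\<lambda>_. {1..k}" "\<lambda>_ y. f y"]) auto
  then show ?thesis unfolding samples_def by (simp add: atLeast0LessThan)
qed

lemma pair_sum:
  fixes f :: "nat \<Rightarrow> real"
  shows "(\<Sum>i=1..2*m. f i) = (\<Sum>j<m. f (2*j+1) + f (2*j+2))"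
proof (induction m)
  case 0 then show ?case by simp
next
  case (Suc m)
  have "{1..2*Suc m} = insert (2*m+2) (insert (2*m+1) {1..2*m})" by auto
  then have "(\<Sum>i=1..2*Suc m. f i) = f (2*m+2) + (f (2*m+1) + (\<Sum>i=1..2*m. f i))"
    by simp
  then show ?case using Suc by simp
qed

lemma min_affinity:
  fixes P Q :: "'a \<Rightarrow> real"
  assumes "finite A" "\<And>x. x\<in>A \<Longrightarrow> P x \<ge> 0" "\<And>x. x\<in>A \<Longrightarrow> Q x \<ge> 0"
    "sum P A = 1" "sum Q A = 1"
  shows "(\<Sum>x\<in>A. sqrt (P x * Q x))^2 / 2 \<le> (\<Sum>x\<in>A. min (P x) (Q x))"
proof -
  have e: "sqrt (P x * Q x) = sqrt (min (P x) (Q x)) * sqrt (max (P x) (Q x))" for x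
    by (simp add: real_sqrt_mult[symmetric] min_def max_def mult.commute)
  have "(\<Sum>x\<in>A. sqrt (P x * Q x))^2 \<le> (\<Sum>x\<in>A. (sqrt (min (P x) (Q x)))^2) * (\<Sum>x\<in>A. (sqrt (max (P x) (Q x)))^2)"
    unfolding e by (rule Cauchy_Schwarz_ineq_sum)
  also have "\<dots> = (\<Sum>x\<in>A. min (P x) (Q x)) * (\<Sum>x\<in>A. max (P x) (Q x))"
    using assms by (intro arg_cong2[where f="(*)"] sum.cong) (auto simp: max_def min_def)
  also have "\<dots> \<le> (\<Sum>x\<in>A. min (P x) (Q x)) * 2"
  proof (rule mult_left_mono)
    have "(\<Sum>x\<in>A. max (P x) (Q x)) \<le> (\<Sum>x\<in>A. P x + Q x)"
      using assms by (intro sum_mono) (auto simp: max_def)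
    then show "(\<Sum>x\<in>A. max (P x) (Q x)) \<le> 2" using assms by (simp add: sum.distrib)
    show "0 \<le> (\<Sum>x\<in>A. min (P x) (Q x))" using assms by (intro sum_nonneg) auto
  qed
  finally show ?thesis by simp
qed

definition av :: "nat \<Rightarrow> real \<Rightarrow> bool \<Rightarrow> real" where
  "av m \<delta> b = (1 + (if b then \<delta> else -\<delta>)) / (2 * real m)"

definition hyp :: "nat \<Rightarrow> real \<Rightarrow> nat set \<Rightarrow> nat \<Rightarrow> real" where
  "hyp m \<delta> S i = (if 1 \<le> i \<and> i \<le> 2*m then
      (if odd i then av m \<delta> ((i-1) div 2 \<in> S) else av m \<delta> ((i-1) div 2 \<notin> S)) else 0)"

lemma hyp_odd[simp]: "j < m \<Longrightarrow> hyp m \<delta> S (2*j+1) = av m \<delta> (j \<in> S)"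
  by (simp add: hyp_def)
lemma hyp_even[simp]: "j < m \<Longrightarrow> hyp m \<delta> S (2*j+2) = av m \<delta> (j \<notin> S)"
proof -
  assume "j < m"
  moreover have "(2*j+2 - 1) div 2 = j" by simp
  ultimately show ?thesis by (simp add: hyp_def)
qed

lemma hyp_odd'[simp]: "j < m \<Longrightarrow> hyp m \<delta> S (Suc (2*j)) = av m \<delta> (j \<in> S)"
  using hyp_odd by simp
lemma hyp_even'[simp]: "j < m \<Longrightarrow> hyp m \<delta> S (Suc (Suc (2*j))) = av m \<delta> (j \<notin> S)"
  using hyp_even by simp

lemma av_sum: "m \<ge> 1 \<Longrightarrow> av m \<delta> b + av m \<delta> (\<not> b) = 1 / m"
  by (auto simp: av_def field_simps)

lemma av_nonneg: "0 \<le> \<delta> \<Longrightarrow> \<delta> \<le> 1 \<Longrightarrow> 0 \<le> av m \<delta> b"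
  by (auto simp: av_def)

lemma av_le1: "m \<ge> 1 \<Longrightarrow> 0 \<le> \<delta> \<Longrightarrow> \<delta> \<le> 1 \<Longrightarrow> av m \<delta> b \<le> 1"
  by (auto simp: av_def field_simps)

lemma hyp_nonneg: "0 \<le> \<delta> \<Longrightarrow> \<delta> \<le> 1 \<Longrightarrow> 0 \<le> hyp m \<delta> S i"
  by (auto simp: hyp_def av_nonneg)

lemma hyp_sum:
  assumes "m \<ge> 1" "2*m \<le> k"
  shows "(\<Sum>i=1..k. hyp m \<delta> S i) = 1"
proof -
  have "(\<Sum>i=1..k. hyp m \<delta> S i) = (\<Sum>i=1..2*m. hyp m \<delta> S i)"
    using assms by (intro sum.mono_neutral_right) (auto simp: hyp_def)
  also have "\<dots> = (\<Sum>j<m. av m \<delta> (j \<in> S) + av m \<delta> (\<not> (j \<in> S)))"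
    by (subst pair_sum) (intro sum.cong; simp)
  also have "\<dots> = (\<Sum>j<m. 1 / real m)" using assms by (simp add: av_sum)
  also have "\<dots> = 1" using assms by simp
  finally show ?thesis .
qed

lemma hyp_simplex:
  assumes "m \<ge> 1" "2*m \<le> k" "0 \<le> \<delta>" "\<delta> \<le> 1"
  shows "hyp m \<delta> S \<in> prob_simplex k"
  using assms hyp_sum[OF assms(1,2)]
  by (auto simp: prob_simplex_def hyp_def av_le1 av_nonneg)

lemma sqrt_prod: "sqrt (\<Prod>i\<in>A. f i) = (\<Prod>i\<in>A. sqrt (f i))"
  by (induct A rule: infinite_finite_induct) (auto simp: real_sqrt_mult)

lemma av_sqrt:
  assumes "m \<ge> 1" "0 \<le> \<delta>" "\<delta> \<le> 1"
  shows "sqrt (av m \<delta> b * av m \<delta> (\<not> b)) \<ge> (1 - \<delta>^2) / (2 * real m)"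
proof (rule real_le_rsqrt)
  have p: "av m \<delta> b * av m \<delta> (\<not> b) = (1 - \<delta>^2) / (2 * real m)^2"
    by (cases b) (auto simp: av_def field_simps power2_eq_square)
  have h: "0 \<le> 1 - \<delta>^2" "1 - \<delta>^2 \<le> 1"
    using assms by (auto simp: power2_eq_square mult_le_one)
  have "(1 - \<delta>^2) * (1 - \<delta>^2) \<le> 1 - \<delta>^2"
    using h by (intro mult_left_le_one_le) auto
  then have "(1 - \<delta>^2)^2 \<le> 1 - \<delta>^2" by (simp only: power2_eq_square)
  then have "(1 - \<delta>^2)^2 / (2 * real m)^2 \<le> (1 - \<delta>^2) / (2 * real m)^2"
    by (simp add: divide_right_mono)
  then show "((1 - \<delta>^2) / (2 * real m))^2 \<le> av m \<delta> b * av m \<delta> (\<not> b)"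
    unfolding p by (simp add: power_divide)
qed

lemma BC_bound:
  assumes "m \<ge> 1" "2*m \<le> k" "0 \<le> \<delta>" "\<delta> \<le> 1" "j < m" "j \<notin> S"
  shows "(\<Sum>i=1..k. sqrt (hyp m \<delta> S i * hyp m \<delta> (insert j S) i)) \<ge> 1 - \<delta>^2 / m"
proof -
  define c where "c = \<delta>^2 / (2 * real m)"
  have pt: "sqrt (hyp m \<delta> S i * hyp m \<delta> (insert j S) i) \<ge>
      (hyp m \<delta> S i + hyp m \<delta> (insert j S) i)/2 - (if i = 2*j+1 \<or> i = 2*j+2 then c else 0)" for i
  proof (cases "i = 2*j+1 \<or> i = 2*j+2")
    case True
    then show ?thesis
    proof
      assume i: "i = 2*j+1"
      have "sqrt (av m \<delta> False * av m \<delta> (\<not> False)) \<ge> (1 - \<delta>^2) / (2 * real m)"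
        by (rule av_sqrt[OF assms(1,3,4)])
      moreover have "av m \<delta> False + av m \<delta> (\<not> False) = 1/m" using av_sum assms by blast
      moreover have "hyp m \<delta> S i = av m \<delta> False" "hyp m \<delta> (insert j S) i = av m \<delta> True"
        using i assms by simp_all
      ultimately show ?thesis using i assms by (simp add: c_def field_simps mult.commute)
    next
      assume i: "i = 2*j+2"
      have "sqrt (av m \<delta> True * av m \<delta> (\<not> True)) \<ge> (1 - \<delta>^2) / (2 * real m)"
        by (rule av_sqrt[OF assms(1,3,4)])
      moreover have "av m \<delta> True + av m \<delta> (\<not> True) = 1/m" using av_sum assms by blast
      moreover have "hyp m \<delta> S i = av m \<delta> True" "hyp m \<delta> (insert j S) i = av m \<delta> False"
        using i assms by simp_all
      ultimately show ?thesis using i assms by (simp add: c_def field_simps mult.commute)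
    qed
  next
    case False
    have "hyp m \<delta> S i = hyp m \<delta> (insert j S) i"
    proof (cases "1 \<le> i \<and> i \<le> 2*m")
      case True
      have "(i-1) div 2 \<noteq> j" using False True by auto
      then show ?thesis by (simp add: hyp_def)
    next
      case False
      then show ?thesis unfolding hyp_def by (simp only: if_False)
    qed
    then show ?thesis using False hyp_nonneg[OF assms(3,4)] by simp
  qed
  have "(\<Sum>i=1..k. (hyp m \<delta> S i + hyp m \<delta> (insert j S) i)/2 - (if i = 2*j+1 \<or> i = 2*j+2 then c else 0))
      = (1 + 1)/2 - (\<Sum>i=1..k. (if i = 2*j+1 \<or> i = 2*j+2 then c else 0))"
    using hyp_sum[OF assms(1,2)] by (simp add: sum_subtractf sum.distrib sum_divide_distrib[symmetric])
  also have "(\<Sum>i=1..k. (if i = 2*j+1 \<or> i = 2*j+2 then c else 0)) = (\<Sum>i\<in>{2*j+1,2*j+2}. c)"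
    using assms by (intro sum.mono_neutral_cong_right) auto
  also have "\<dots> = 2*c" by simp
  finally have "(\<Sum>i=1..k. (hyp m \<delta> S i + hyp m \<delta> (insert j S) i)/2 - (if i = 2*j+1 \<or> i = 2*j+2 then c else 0))
     = 1 - \<delta>^2/m" by (simp add: c_def)
  moreover have "(\<Sum>i=1..k. (hyp m \<delta> S i + hyp m \<delta> (insert j S) i)/2 - (if i = 2*j+1 \<or> i = 2*j+2 then c else 0))
     \<le> (\<Sum>i=1..k. sqrt (hyp m \<delta> S i * hyp m \<delta> (insert j S) i))"
    by (rule sum_mono) (rule pt)
  ultimately show ?thesis by simp
qed

lemma sp_nonneg: "0 \<le> \<delta> \<Longrightarrow> \<delta> \<le> 1 \<Longrightarrow> 0 \<le> sample_prob n (hyp m \<delta> S) x"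
  unfolding sample_prob_def by (intro prod_nonneg) (auto intro: hyp_nonneg)

lemma sp_sum:
  assumes "m \<ge> 1" "2*m \<le> k"
  shows "(\<Sum>x\<in>samples k n. sample_prob n (hyp m \<delta> S) x) = 1"
  unfolding sample_prob_def sample_sum hyp_sum[OF assms] by simp

lemma finite_samples: "finite (samples k n)"
  unfolding samples_def by (intro finite_PiE) auto

lemma affinity:
  fixes \<delta> :: real
  assumes "m \<ge> 1" "2*m \<le> k" "0 \<le> \<delta>" "\<delta> \<le> 1" "4 * real n * \<delta>^2 \<le> real m" "j < m" "j \<notin> S"
  shows "(\<Sum>x\<in>samples k n. min (sample_prob n (hyp m \<delta> S) x) (sample_prob n (hyp m \<delta> (insert j S)) x)) \<ge> 1/4"
proof -
  define BC where "BC = (\<Sum>i=1..k. sqrt (hyp m \<delta> S i * hyp m \<delta> (insert j S) i))"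
  define \<beta> where "\<beta> = 1 - \<delta>^2 / m"
  have "\<delta>^2 \<le> 1" using assms by (simp add: power_le_one)
  then have b0: "0 \<le> \<beta>" using assms by (simp add: \<beta>_def field_simps)
  have bb: "\<beta> \<le> BC" unfolding \<beta>_def BC_def by (rule BC_bound[OF assms(1-4,6,7)])
  have e: "(\<Sum>x\<in>samples k n. sqrt (sample_prob n (hyp m \<delta> S) x * sample_prob n (hyp m \<delta> (insert j S)) x)) = BC^n"
    unfolding BC_def sample_prob_def prod.distrib[symmetric] sqrt_prod by (rule sample_sum)
  have "(\<Sum>x\<in>samples k n. sqrt (sample_prob n (hyp m \<delta> S) x * sample_prob n (hyp m \<delta> (insert j S)) x))^2 / 2
     \<le> (\<Sum>x\<in>samples k n. min (sample_prob n (hyp m \<delta> S) x) (sample_prob n (hyp m \<delta> (insert j S)) x))"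
    using assms by (intro min_affinity finite_samples sp_nonneg sp_sum) auto
  moreover have "(BC^n)^2 \<ge> (\<beta>^n)^2"
    using b0 bb by (intro power_mono) auto
  moreover have "(\<beta>^n)^2 \<ge> 1/2"
  proof -
    have "-1 \<le> -(\<delta>^2 / m)" using \<open>\<delta>^2 \<le> 1\<close> assms by (simp add: field_simps)
    then have A: "1 + real (2*n) * (-(\<delta>^2 / m)) \<le> \<beta>^(2*n)"
      using Bernoulli_inequality[OF \<open>-1 \<le> -(\<delta>^2 / m)\<close>, of "2*n"] unfolding \<beta>_def by simp
    have B: "1 + real (2*n) * (-(\<delta>^2 / m)) \<ge> 1/2"
    proof -
      have "real (2*n) * (\<delta>^2 / m) = (4 * real n * \<delta>^2) / m / 2" by simp
      also have "\<dots> \<le> 1/2" using assms by (simp add: field_simps)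
      finally show ?thesis by simp
    qed
    have "(\<beta>^n)^2 = \<beta>^(2*n)" by (simp add: power_mult[symmetric] mult.commute)
    then show ?thesis using A B by linarith
  qed
  ultimately show ?thesis unfolding e by simp
qed

definition ell :: "nat \<Rightarrow> real \<Rightarrow> nat \<Rightarrow> bool \<Rightarrow> (nat \<Rightarrow> real) \<Rightarrow> real" where
  "ell m \<delta> j b q = \<bar>av m \<delta> b - q (2*j+1)\<bar> + \<bar>av m \<delta> (\<not> b) - q (2*j+2)\<bar>"

lemma ell_nonneg: "0 \<le> ell m \<delta> j b q"
  by (simp add: ell_def)

lemma ell_pair: "m \<ge> 1 \<Longrightarrow> ell m \<delta> j True q + ell m \<delta> j False q \<ge> 2 * \<delta> / m"
proof -
  assume m: "m \<ge> 1"
  have d: "av m \<delta> True - av m \<delta> False = \<delta> / m" using m by (simp add: av_def field_simps)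
  have t: "\<bar>a - b\<bar> \<le> \<bar>a - y\<bar> + \<bar>b - y\<bar>" for a b y :: real by linarith
  have "\<bar>av m \<delta> True - av m \<delta> False\<bar> + \<bar>av m \<delta> False - av m \<delta> True\<bar> \<le> ell m \<delta> j True q + ell m \<delta> j False q"
    unfolding ell_def using t[of "av m \<delta> True" "av m \<delta> False" "q (2*j+1)"] t[of "av m \<delta> False" "av m \<delta> True" "q (2*j+2)"]
    by simp
  moreover have "\<bar>av m \<delta> True - av m \<delta> False\<bar> + \<bar>av m \<delta> False - av m \<delta> True\<bar> \<ge> 2 * \<delta> / m"
    using d by linarith
  ultimately show ?thesis by linarith
qed

lemma loss_decomp:
  assumes "2*m \<le> k"
  shows "l1dist k (hyp m \<delta> S) q \<ge> (\<Sum>j<m. ell m \<delta> j (j \<in> S) q)"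
proof -
  have "(\<Sum>j<m. ell m \<delta> j (j \<in> S) q) = (\<Sum>i=1..2*m. \<bar>hyp m \<delta> S i - q i\<bar>)"
    by (subst pair_sum) (intro sum.cong; simp add: ell_def)
  also have "\<dots> \<le> l1dist k (hyp m \<delta> S) q"
    unfolding l1dist_def using assms by (intro sum_mono2) auto
  finally show ?thesis .
qed

lemma sum_Pow_split:
  assumes "finite B" "j \<notin> B"
  shows "(\<Sum>S\<in>Pow (insert j B). f S) = (\<Sum>S\<in>Pow B. f S + f (insert j S))"
proof -
  have d: "Pow B \<inter> insert j ` Pow B = {}" using assms by auto
  have i: "inj_on (insert j) (Pow B)"
  proof (rule inj_onI)
    fix x y assume "x \<in> Pow B" "y \<in> Pow B" "insert j x = insert j y"
    then have "insert j x - {j} = insert j y - {j}" "j \<notin> x" "j \<notin> y" using assms by auto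
    then show "x = y" by simp
  qed
  have "(\<Sum>S\<in>Pow (insert j B). f S) = (\<Sum>S\<in>Pow B. f S) + (\<Sum>S\<in>insert j ` Pow B. f S)"
    unfolding Pow_insert using assms d by (intro sum.union_disjoint) auto
  also have "(\<Sum>S\<in>insert j ` Pow B. f S) = (\<Sum>S\<in>Pow B. f (insert j S))"
    using i by (simp add: sum.reindex)
  finally show ?thesis by (simp add: sum.distrib)
qed

lemma assouad:
  fixes \<delta> :: real and mm :: "(nat \<Rightarrow> nat) \<Rightarrow> nat \<Rightarrow> real"
  assumes "m \<ge> 1" "2*m \<le> k" "0 \<le> \<delta>" "\<delta> \<le> 1" "4 * real n * \<delta>^2 \<le> real m"
  shows "\<exists>S. (\<Sum>x\<in>samples k n. sample_prob n (hyp m \<delta> S) x * l1dist k (hyp m \<delta> S) (mm x)) \<ge> \<delta>/4"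
proof (rule ccontr)
  define sp where "sp S x = sample_prob n (hyp m \<delta> S) x" for S x
  define R where "R S = (\<Sum>x\<in>samples k n. sp S x * l1dist k (hyp m \<delta> S) (mm x))" for S
  define T where "T j S = (\<Sum>x\<in>samples k n. sp S x * ell m \<delta> j (j \<in> S) (mm x))" for j S
  assume "\<not> ?thesis"
  then have lt: "R S < \<delta>/4" for S unfolding R_def sp_def by (meson not_le)
  have spn: "0 \<le> sp S x" for S x unfolding sp_def using assms by (intro sp_nonneg)
  have RT: "R S \<ge> (\<Sum>j<m. T j S)" for S
  proof -
    have "(\<Sum>j<m. T j S) = (\<Sum>x\<in>samples k n. sp S x * (\<Sum>j<m. ell m \<delta> j (j \<in> S) (mm x)))"
      unfolding T_def by (simp add: sum_distrib_left sum.swap[of _ "{..<m}"])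
    also have "\<dots> \<le> R S" unfolding R_def
      using assms spn by (intro sum_mono mult_left_mono loss_decomp) auto
    finally show ?thesis .
  qed
  have Tj: "(\<Sum>S\<in>Pow {..<m}. T j S) \<ge> 2^(m-1) * (\<delta> / (2*m))" if j: "j < m" for j
  proof -
    define B where "B = {..<m} - {j}"
    have ins: "{..<m} = insert j B" using j unfolding B_def by auto
    have pair: "T j S + T j (insert j S) \<ge> \<delta> / (2*m)" if "S \<in> Pow B" for S
    proof -
      have jS: "j \<notin> S" using that unfolding B_def by auto
      have "T j S + T j (insert j S) = (\<Sum>x\<in>samples k n. sp S x * ell m \<delta> j False (mm x) + sp (insert j S) x * ell m \<delta> j True (mm x))"
        unfolding T_def using jS by (simp add: sum.distrib)
      also have "\<dots> \<ge> (\<Sum>x\<in>samples k n. min (sp S x) (sp (insert j S) x) * (2 * \<delta> / m))"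
      proof (rule sum_mono)
        fix x
        have "min (sp S x) (sp (insert j S) x) * (2 * \<delta> / m) \<le> min (sp S x) (sp (insert j S) x) * (ell m \<delta> j True (mm x) + ell m \<delta> j False (mm x))"
          using ell_pair[OF assms(1)] spn by (intro mult_left_mono) auto
        also have "\<dots> \<le> sp S x * ell m \<delta> j False (mm x) + sp (insert j S) x * ell m \<delta> j True (mm x)"
          using ell_nonneg[of m \<delta> j True "mm x"] ell_nonneg[of m \<delta> j False "mm x"]
          by (simp add: distrib_left mult_right_mono add_mono min_def)
        finally show "min (sp S x) (sp (insert j S) x) * (2 * \<delta> / m) \<le> sp S x * ell m \<delta> j False (mm x) + sp (insert j S) x * ell m \<delta> j True (mm x)" .
      qed
      also have "(\<Sum>x\<in>samples k n. min (sp S x) (sp (insert j S) x) * (2 * \<delta> / m)) = (\<Sum>x\<in>samples k n. min (sp S x) (sp (insert j S) x)) * (2 * \<delta> / m)"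
        by (rule sum_distrib_right[symmetric])
      also have "\<dots> \<ge> 1/4 * (2 * \<delta> / m)"
        using affinity[OF assms j jS] assms unfolding sp_def by (intro mult_right_mono) auto
      finally show ?thesis by simp
    qed
    have c: "card (Pow B) = 2^(m-1)" using j unfolding B_def by (simp add: card_Pow)
    have "(\<Sum>S\<in>Pow {..<m}. T j S) = (\<Sum>S\<in>Pow B. T j S + T j (insert j S))"
      unfolding ins by (rule sum_Pow_split) (auto simp: B_def)
    also have "\<dots> \<ge> (\<Sum>S\<in>Pow B. \<delta> / (2*m))" by (rule sum_mono) (rule pair)
    finally show ?thesis using c by simp
  qed
  have "(\<Sum>S\<in>Pow {..<m}. R S) \<ge> (\<Sum>S\<in>Pow {..<m}. \<Sum>j<m. T j S)"
    by (rule sum_mono) (rule RT)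
  also have "(\<Sum>S\<in>Pow {..<m}. \<Sum>j<m. T j S) = (\<Sum>j<m. \<Sum>S\<in>Pow {..<m}. T j S)"
    by (rule sum.swap)
  also have "\<dots> \<ge> (\<Sum>j<m. 2^(m-1) * (\<delta> / (2*m)))" by (rule sum_mono) (rule Tj, simp)
  also have "(\<Sum>j<m. 2^(m-1) * (\<delta> / (2*m))) = 2^m * (\<delta>/4)"
  proof -
    have "(2::real)^m = 2 * 2^(m-1)" using assms by (simp add: power_eq_if)
    then show ?thesis using assms by (simp add: field_simps)
  qed
  finally have ge: "(\<Sum>S\<in>Pow {..<m}. R S) \<ge> 2^m * (\<delta>/4)" .
  have "(\<Sum>S\<in>Pow {..<m}. R S) < (\<Sum>S\<in>Pow {..<m}. \<delta>/4)"
  proof (rule sum_strict_mono)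
    show "Pow {..<m} \<noteq> {}" by blast
    fix S show "R S < \<delta>/4" by (rule lt)
  qed simp
  also have "\<dots> = 2^m * (\<delta>/4)" by (simp add: card_Pow)
  finally show False using ge by simp
qed

definition ebasis :: "nat \<Rightarrow> nat \<Rightarrow> real" where "ebasis a j = (if j = a then 1 else 0)"

definition coordf :: "nat \<Rightarrow> nat \<Rightarrow> (nat \<Rightarrow> real) \<Rightarrow> real" where
  "coordf k a q = (1 - l1dist k (ebasis a) q + l1dist k (\<lambda>_. 0) q) / 2"

lemma coordf_eq:
  assumes "q \<in> prob_simplex k" "a \<in> {1..k}"
  shows "coordf k a q = q a"
proof -
  have q: "\<And>j. j \<in> {1..k} \<Longrightarrow> 0 \<le> q j \<and> q j \<le> 1" using assms unfolding prob_simplex_def by auto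
  have "l1dist k (ebasis a) q = \<bar>1 - q a\<bar> + (\<Sum>j\<in>{1..k}-{a}. \<bar>q j\<bar>)"
    unfolding l1dist_def using assms by (subst sum.remove[of _ a]) (auto simp: ebasis_def intro!: sum.cong)
  moreover have "l1dist k (\<lambda>_. 0) q = \<bar>q a\<bar> + (\<Sum>j\<in>{1..k}-{a}. \<bar>q j\<bar>)"
    unfolding l1dist_def using assms by (subst sum.remove[of _ a]) auto
  ultimately show ?thesis unfolding coordf_def using q[of a] assms by simp
qed

lemma est_mean:
  assumes ps: "prob_space M" and sp: "space M \<subseteq> prob_simplex k"
    and meas: "\<And>p. (\<lambda>q. l1dist k p q) \<in> borel_measurable M"
  shows "\<exists>mu. \<forall>p. (\<integral>\<^sup>+ q. ennreal (l1dist k p q) \<partial>M) \<ge> ennreal (l1dist k p mu)"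
proof -
  interpret prob_space M by (rule ps)
  define mu where "mu a = (\<integral>q. coordf k a q \<partial>M)" for a
  have cm: "coordf k a \<in> borel_measurable M" for a
    unfolding coordf_def using meas by measurable
  have cb: "q \<in> space M \<Longrightarrow> a \<in> {1..k} \<Longrightarrow> coordf k a q = q a \<and> 0 \<le> q a \<and> q a \<le> 1" for q a
    using sp coordf_eq[of q k a] unfolding prob_simplex_def by auto
  have ci: "integrable M (coordf k a)" if a: "a \<in> {1..k}" for a
    using cm by (intro integrable_const_bound[where B=1]) (auto simp: cb[OF _ a])
  show ?thesis
  proof (intro exI allI)
    fix p
    define g where "g q = (\<Sum>a\<in>{1..k}. \<bar>p a - coordf k a q\<bar>)" for q
    have gi: "integrable M g" unfolding g_def using ci by auto
    have "(\<integral>\<^sup>+ q. ennreal (l1dist k p q) \<partial>M) = (\<integral>\<^sup>+ q. ennreal (g q) \<partial>M)"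
      by (intro nn_integral_cong) (auto simp: g_def l1dist_def cb intro!: sum.cong)
    also have "\<dots> = ennreal (integral\<^sup>L M g)"
      by (rule nn_integral_eq_integral[OF gi]) (auto simp: g_def)
    also have "integral\<^sup>L M g = (\<Sum>a\<in>{1..k}. \<integral>q. \<bar>p a - coordf k a q\<bar> \<partial>M)"
      unfolding g_def by (rule Bochner_Integration.integral_sum[where f="\<lambda>a q. \<bar>p a - coordf k a q\<bar>"]) (use ci in auto)
    finally have E: "(\<integral>\<^sup>+ q. ennreal (l1dist k p q) \<partial>M) = ennreal (\<Sum>a\<in>{1..k}. \<integral>q. \<bar>p a - coordf k a q\<bar> \<partial>M)" .
    have "(\<Sum>a\<in>{1..k}. \<bar>p a - mu a\<bar>) \<le> (\<Sum>a\<in>{1..k}. \<integral>q. \<bar>p a - coordf k a q\<bar> \<partial>M)"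
    proof (rule sum_mono)
      fix a assume a: "a \<in> {1..k}"
      have "(\<integral>q. p a - coordf k a q \<partial>M) = p a - mu a"
        using ci[OF a] by (simp add: mu_def prob_space)
      then show "\<bar>p a - mu a\<bar> \<le> (\<integral>q. \<bar>p a - coordf k a q\<bar> \<partial>M)"
        using integral_abs_bound[of M "\<lambda>q. p a - coordf k a q"] by simp
    qed
    then show "(\<integral>\<^sup>+ q. ennreal (l1dist k p q) \<partial>M) \<ge> ennreal (l1dist k p mu)"
      unfolding E by (simp add: ennreal_leI l1dist_def)
  qed
qed

lemma numeric:
  fixes n k :: nat
  assumes "n \<ge> 1" "2 \<le> k" "k \<le> 32 * n"
  defines "m \<equiv> k div 2"
  defines "\<delta> \<equiv> min 1 (sqrt (real m / (4 * real n)))"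
  shows "3 * ln 2 / 4096 * sqrt ((real k - 1) / real n) \<le> \<delta> / 4"
proof -
  define s where "s = sqrt ((real k - 1) / real n)"
  define t where "t = sqrt (real m / (4 * real n))"
  have n0: "real n > 0" using assms by simp
  have s0: "0 \<le> s" unfolding s_def using assms by simp
  have "(real k - 1) / real n \<le> 36"
    using assms n0 by (simp add: field_simps)
  then have s6: "s \<le> 6" unfolding s_def using real_sqrt_le_mono[of _ 36] by simp
  have "real k - 1 \<le> 2 * real m" unfolding m_def by linarith
  then have "(real k - 1) / real n \<le> 2 * real m / real n"
    using n0 by (intro divide_right_mono) auto
  also have "\<dots> \<le> 9 * (real m / (4 * real n))" using n0 by (simp add: field_simps)
  finally have "(real k - 1) / real n \<le> 9 * (real m / (4 * real n))" .
  then have "s \<le> sqrt 9 * t" unfolding s_def t_def using real_sqrt_le_mono real_sqrt_mult by metis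
  then have s3: "s \<le> 3 * t" by simp
  have s6d: "s \<le> 6 * \<delta>" unfolding \<delta>_def t_def[symmetric] using s6 s3 s0 by (auto simp: min_def)
  have "3 * ln 2 / 4096 * s \<le> 3 / 4096 * s"
    using ln_2_less_1 s0 by (intro mult_right_mono) auto
  moreover have "3 / 4096 * s \<le> \<delta> / 4" using s6d s0 by linarith
  ultimately have "3 * ln 2 / 4096 * s \<le> \<delta> / 4" by (rule order.trans)
  then show ?thesis unfolding s_def .
qed

theorem lemma9:
  fixes n k :: nat
  assumes "n \<ge> 1" and "1 \<le> k" and "k \<le> 32 * n"
  shows "(INF est\<in>{est. randomized_estimator k n est}. SUP p\<in>prob_simplex k. risk k n est p)
           \<ge> ennreal (3 * ln 2 / 4096 * sqrt ((real k - 1) / real n))"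
proof (cases "k = 1")
  case True
  then show ?thesis by simp
next
  case False
  then have k2: "2 \<le> k" using assms by simp
  define m where "m = k div 2"
  define \<delta> where "\<delta> = min 1 (sqrt (real m / (4 * real n)))"
  have m1: "m \<ge> 1" and m2: "2*m \<le> k" using k2 unfolding m_def by auto
  have n0: "real n > 0" using assms by simp
  have d0: "0 \<le> \<delta>" and d1: "\<delta> \<le> 1" unfolding \<delta>_def by auto
  have "\<delta>^2 \<le> (sqrt (real m / (4 * real n)))^2"
    using d0 unfolding \<delta>_def by (intro power_mono) auto
  also have "\<dots> = real m / (4 * real n)" by simp
  finally have d4: "4 * real n * \<delta>^2 \<le> real m" using n0 by (simp add: field_simps)
  have bound: "ennreal (3 * ln 2 / 4096 * sqrt ((real k - 1) / real n)) \<le> ennreal (\<delta> / 4)"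
    using numeric[OF assms(1) k2 assms(3)] unfolding \<delta>_def m_def by (rule ennreal_leI)
  show ?thesis
  proof (rule INF_greatest)
    fix est assume "est \<in> {est. randomized_estimator k n est}"
    then have re: "randomized_estimator k n est" by simp
    define mm where "mm x = (SOME mu. \<forall>p. (\<integral>\<^sup>+ q. ennreal (l1dist k p q) \<partial>est x) \<ge> ennreal (l1dist k p mu))" for x
    have mmp: "(\<integral>\<^sup>+ q. ennreal (l1dist k p q) \<partial>est x) \<ge> ennreal (l1dist k p (mm x))"
      if "x \<in> samples k n" for x p
    proof -
      have "\<exists>mu. \<forall>p. (\<integral>\<^sup>+ q. ennreal (l1dist k p q) \<partial>est x) \<ge> ennreal (l1dist k p mu)"
        using re that unfolding randomized_estimator_def by (intro est_mean) auto
      then show ?thesis unfolding mm_def by (rule someI2_ex) blast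
    qed
    obtain S where S: "(\<Sum>x\<in>samples k n. sample_prob n (hyp m \<delta> S) x * l1dist k (hyp m \<delta> S) (mm x)) \<ge> \<delta>/4"
      using assouad[OF m1 m2 d0 d1 d4] by blast
    define p where "p = hyp m \<delta> S"
    have pS: "p \<in> prob_simplex k" unfolding p_def by (rule hyp_simplex[OF m1 m2 d0 d1])
    have "ennreal (\<delta>/4) \<le> ennreal (\<Sum>x\<in>samples k n. sample_prob n p x * l1dist k p (mm x))"
      using S unfolding p_def by (rule ennreal_leI)
    also have "\<dots> = (\<Sum>x\<in>samples k n. ennreal (sample_prob n p x) * ennreal (l1dist k p (mm x)))"
      using sp_nonneg[OF d0 d1] unfolding p_def
      by (subst sum_ennreal[symmetric]) (auto simp: l1dist_def ennreal_mult intro!: sum.cong sum_nonneg mult_nonneg_nonneg)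
    also have "\<dots> \<le> risk k n est p"
      unfolding risk_def by (intro sum_mono mult_left_mono mmp) auto
    also have "\<dots> \<le> (SUP p\<in>prob_simplex k. risk k n est p)"
      using pS by (rule SUP_upper)
    finally show "ennreal (3 * ln 2 / 4096 * sqrt ((real k - 1) / real n)) \<le> (SUP p\<in>prob_simplex k. risk k n est p)"
      using bound by (rule order.trans[rotated])
  qed
qed

end
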